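(* Let $Q$ be a binary symmetric $m\times m$ matrix of rank $r$ over $\mathbb{F}_2$, let $b\in\mathbb{F}_2^m$, and let $$S=\sum_{x\in\mathbb{F}_2^m} i^{\,xQx^\top+2bx^\top}.$$ Then there exists $z_1\in\mathbb{F}_2^m$ with $z_1Q=d_Q$ (over $\mathbb{F}_2$), and either $S=0$ or $$S^2=i^{\,z_1Qz_1^\top+2bz_1^\top}\,2^{2m-r}.$$
   Context: Here $i=\sqrt{-1}$, $d_Q$ denotes the main diagonal of $Q$ as a binary vector, and exponents of $i$ are computed in the integers modulo 4, viewing binary entries as the integers 0 and 1. *)

theory Defs
  imports Complex_Main "HOL-Library.Z2" "Jordan_Normal_Form.DL_Rank"
begin

definition bint :: "bit \<Rightarrow> int" where
  "bint b = (if b = 1 then 1 else 0)"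

definition rank2 :: "nat \<Rightarrow> bit mat \<Rightarrow> nat" where
  "rank2 m Q = vec_space.rank m (Q :: bit mat)"

definition diag_vec :: "bit mat \<Rightarrow> bit vec" where
  "diag_vec Q = vec (dim_row Q) (\<lambda>j. Q $$ (j, j))"

text \<open>x Q y^T computed in the integers (entries viewed as 0/1).\<close>
definition qform_int :: "nat \<Rightarrow> bit mat \<Rightarrow> bit vec \<Rightarrow> bit vec \<Rightarrow> int" where
  "qform_int m Q x y = (\<Sum>j<m. \<Sum>k<m. bint (x $ j) * bint (Q $$ (j, k)) * bint (y $ k))"

definition lin_int :: "nat \<Rightarrow> bit vec \<Rightarrow> bit vec \<Rightarrow> int" where
  "lin_int m b x = (\<Sum>j<m. bint (b $ j) * bint (x $ j))"

definition ipow :: "int \<Rightarrow> complex" where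
  "ipow e = \<i> ^ nat (e mod 4)"

end

theory Submission imports Defs begin

lemma ipow_powi: "ipow e = \<i> powi e"
proof -
  have e: "e = 4 * (e div 4) + e mod 4" by simp
  have "\<i> powi e = \<i> powi (4 * (e div 4)) * \<i> powi (e mod 4)"
    by (subst e, rule power_int_add) auto
  also have "\<i> powi (4 * (e div 4)) = 1"
    by (simp add: power_int_mult)
  also have "\<i> powi (e mod 4) = \<i> ^ nat (e mod 4)"
    by (simp add: power_int_def)
  finally show ?thesis by (simp add: ipow_def)
qed

lemma ipow_add: "ipow (a + b) = ipow a * ipow b"
  by (simp add: ipow_powi power_int_add)

lemma ipow_cong: "a mod 4 = b mod 4 \<Longrightarrow> ipow a = ipow b"
  by (simp add: ipow_def)

lemma ipow_0[simp]: "ipow 0 = 1" by (simp add: ipow_def)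
lemma ipow_2: "ipow 2 = -1" by (simp add: ipow_def)

lemma ipow_2_cong: "a mod 2 = b mod 2 \<Longrightarrow> ipow (2*a) = ipow (2*b)"
  by (rule ipow_cong) presburger

lemma ipow_4: "ipow (4*a) = 1"
  by (simp add: ipow_def)

lemma m2a: "(a::int) = b - 2*d \<Longrightarrow> a mod 2 = b mod 2" by presburger
lemma m2b: "(a::int) = b + 2*d \<Longrightarrow> a mod 2 = b mod 2" by presburger
lemma m4a: "(a::int) = b - 4*d \<Longrightarrow> a mod 4 = b mod 4" by presburger

lemma bit_cases2: "(b::bit) = 0 \<or> b = 1" by (cases b) auto

lemma bint_0[simp]: "bint 0 = 0" and bint_1[simp]: "bint 1 = 1"
  by (auto simp: bint_def)

lemma bint_range: "bint a = 0 \<or> bint a = 1" by (auto simp: bint_def)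

lemma bint_add: "bint (a + b) = bint a + bint b - 2 * bint a * bint b"
  by (cases a; cases b) (auto simp: bint_def)

lemma bint_mult: "bint (a * b) = bint a * bint b"
  by (cases a; cases b) (auto simp: bint_def)

lemma bint_sq: "bint a * bint a = bint a"
  by (cases a) (auto simp: bint_def)

lemma bint_sq3: "bint a * c * bint a = c * bint a"
  by (cases a) (auto simp: bint_def)

lemma bint_sum_mod2: "finite A \<Longrightarrow> bint (sum g A) mod 2 = (\<Sum>k\<in>A. bint (g k)) mod 2"
proof (induction A rule: finite_induct)
  case empty then show ?case by simp
next
  case (insert x F)
  have "bint (sum g (insert x F)) = bint (g x) + bint (sum g F) - 2 * (bint (g x) * bint (sum g F))"
    using insert by (simp del: add_bit_eq_xor add: bint_add)
  then obtain c where c: "bint (sum g (insert x F)) = bint (g x) + bint (sum g F) - 2 * c" by blast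
  have "bint (sum g (insert x F)) mod 2 = (bint (g x) + bint (sum g F)) mod 2" using m2a[OF c] .
  also have "\<dots> = (bint (g x) + (\<Sum>k\<in>F. bint (g k))) mod 2" by (rule mod_add_cong[OF refl insert.IH])
  also have "bint (g x) + (\<Sum>k\<in>F. bint (g k)) = (\<Sum>k\<in>insert x F. bint (g k))" using insert by simp
  finally show ?case .
qed

lemma UNIV_bit: "(UNIV :: bit set) = {0, 1}"
proof (rule UNIV_eq_I)
  fix x :: bit
  show "x \<in> {0, 1}" by (cases x) auto
qed

lemma card_carrier_vec_bit: "card (carrier_vec m :: bit vec set) = 2 ^ m"
proof -
  let ?h = "\<lambda>v :: bit vec. restrict (\<lambda>i. v $ i) {..<m}"
  have bij: "bij_betw ?h (carrier_vec m) ({..<m} \<rightarrow>\<^sub>E (UNIV :: bit set))"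
  proof (rule bij_betw_byWitness[where f' = "\<lambda>g. vec m g"])
    show "\<forall>v\<in>carrier_vec m. vec m (?h v) = v"
    proof
      fix v :: "bit vec" assume v: "v \<in> carrier_vec m"
      show "vec m (?h v) = v"
        by (rule eq_vecI) (use v in simp_all)
    qed
    show "\<forall>g\<in>{..<m} \<rightarrow>\<^sub>E (UNIV :: bit set). ?h (vec m g) = g"
    proof
      fix g :: "nat \<Rightarrow> bit" assume g: "g \<in> {..<m} \<rightarrow>\<^sub>E UNIV"
      show "?h (vec m g) = g"
      proof (rule ext)
        fix i show "?h (vec m g) i = g i"
          using PiE_arb[OF g, of i] by (cases "i < m") simp_all
      qed
    qed
    show "?h ` carrier_vec m \<subseteq> {..<m} \<rightarrow>\<^sub>E UNIV" by (intro image_subsetI) simp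
    show "(\<lambda>g. vec m g) ` ({..<m} \<rightarrow>\<^sub>E UNIV) \<subseteq> carrier_vec m" by (intro image_subsetI) simp
  qed
  have "card (carrier_vec m :: bit vec set) = card ({..<m} \<rightarrow>\<^sub>E (UNIV :: bit set))"
    by (rule bij_betw_same_card[OF bij])
  also have "\<dots> = (\<Prod>i<m. card (UNIV :: bit set))" by (rule card_PiE) simp
  also have "\<dots> = 2 ^ m" by (simp add: UNIV_bit numeral_2_eq_2)
  finally show ?thesis .
qed

lemma finite_carrier_vec_bit[simp]: "finite (carrier_vec m :: bit vec set)"
  by (rule card_ge_0_finite) (simp add: card_carrier_vec_bit)

lemma char_sum:
  fixes w :: "bit vec"
  assumes w: "w \<in> carrier_vec m"
  shows "(\<Sum>x\<in>carrier_vec m. ipow (2 * lin_int m w x)) = (if w = 0\<^sub>v m then 2 ^ m else 0)"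
proof (cases "w = 0\<^sub>v m")
  case True
  then have "lin_int m w x = 0" for x by (simp add: lin_int_def)
  then show ?thesis using True by (simp add: card_carrier_vec_bit)
next
  case False
  then obtain j where j: "j < m" "w $ j = 1" using w
    by (metis bit_not_zero_iff carrier_vecD eq_vecI index_zero_vec(1) index_zero_vec(2))
  define \<sigma> where "\<sigma> x = x + unit_vec m j" for x :: "bit vec"
  have s_in: "\<sigma> x \<in> carrier_vec m" if "x \<in> carrier_vec m" for x
    using that by (simp add: \<sigma>_def)
  have ss: "\<sigma> (\<sigma> x) = x" if "x \<in> carrier_vec m" for x
    using that unfolding \<sigma>_def
    by (intro eq_vecI) (auto simp del: add_bit_eq_xor simp: unit_vec_def)
  have bij: "bij_betw \<sigma> (carrier_vec m) (carrier_vec m)"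
    by (rule bij_betw_byWitness[of _ \<sigma>]) (use s_in ss in auto)
  let ?g = "\<lambda>x. ipow (2 * lin_int m w x)"
  have flip: "?g (\<sigma> x) = - ?g x" if x: "x \<in> carrier_vec m" for x
  proof -
    have "lin_int m w (\<sigma> x) = (\<Sum>k<m. bint (w $ k) * bint (x $ k + (if k = j then 1 else 0)))"
      unfolding lin_int_def \<sigma>_def using x by (intro sum.cong) (auto simp: unit_vec_def)
    also have "\<dots> = (\<Sum>k<m. bint (w $ k) * bint (x $ k)) + (1 - 2 * bint (x $ j))"
    proof -
      have "(\<Sum>k<m. bint (w $ k) * bint (x $ k + (if k = j then 1 else 0)))
          = (\<Sum>k<m. bint (w $ k) * bint (x $ k) + (if k = j then 1 - 2 * bint (x $ j) else 0))"
        using j by (intro sum.cong) (auto simp: bint_add)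
      also have "\<dots> = (\<Sum>k<m. bint (w $ k) * bint (x $ k)) + (1 - 2 * bint (x $ j))"
        using j by (simp add: sum.distrib)
      finally show ?thesis .
    qed
    finally have "2 * lin_int m w (\<sigma> x) = 2 * lin_int m w x + 2 + 4 * (- bint (x $ j))"
      by (simp add: lin_int_def algebra_simps)
    then have "?g (\<sigma> x) = ipow (2 * lin_int m w x) * ipow 2 * ipow (4 * (- bint (x $ j)))"
      by (simp only: ipow_add)
    then show ?thesis by (simp only: ipow_4 ipow_2) simp
  qed
  have "sum ?g (carrier_vec m) = sum (?g \<circ> \<sigma>) (carrier_vec m)"
    using sum.reindex_bij_betw[OF bij, of ?g] by simp
  also have "\<dots> = - sum ?g (carrier_vec m)"
    by (simp add: flip sum_negf)
  finally show ?thesis using False by simp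
qed


lemma diag_split:
  fixes a :: "nat \<Rightarrow> nat \<Rightarrow> int"
  assumes "\<And>j k. j < n \<Longrightarrow> k < n \<Longrightarrow> a j k = a k j"
  shows "(\<Sum>j<n. \<Sum>k<n. a j k) = (\<Sum>j<n. a j j) + 2 * (\<Sum>j<n. \<Sum>k<j. a j k)"
  using assms
proof (induction n)
  case 0 then show ?case by simp
next
  case (Suc n)
  have IH: "(\<Sum>j<n. \<Sum>k<n. a j k) = (\<Sum>j<n. a j j) + 2 * (\<Sum>j<n. \<Sum>k<j. a j k)"
    using Suc by auto
  have sw: "(\<Sum>j<n. a j n) = (\<Sum>k<n. a n k)"
    using Suc.prems by (intro sum.cong) auto
  have "(\<Sum>j<Suc n. \<Sum>k<Suc n. a j k) = (\<Sum>j<n. (\<Sum>k<n. a j k) + a j n) + ((\<Sum>k<n. a n k) + a n n)"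
    by simp
  also have "\<dots> = (\<Sum>j<n. \<Sum>k<n. a j k) + (\<Sum>j<n. a j n) + (\<Sum>k<n. a n k) + a n n"
    by (simp add: sum.distrib)
  also have "\<dots> = (\<Sum>j<Suc n. a j j) + 2 * (\<Sum>j<Suc n. \<Sum>k<j. a j k)"
    using IH sw by simp
  finally show ?case .
qed

lemma swap_bilin:
  fixes F G :: "nat \<Rightarrow> int" and q :: "nat \<Rightarrow> nat \<Rightarrow> int"
  assumes "\<And>j k. j < n \<Longrightarrow> k < n \<Longrightarrow> q j k = q k j"
  shows "(\<Sum>j<n. \<Sum>k<n. F j * q j k * G k) = (\<Sum>j<n. \<Sum>k<n. G j * q j k * F k)"
proof -
  have "(\<Sum>j<n. \<Sum>k<n. F j * q j k * G k) = (\<Sum>k<n. \<Sum>j<n. F j * q j k * G k)"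
    by (rule sum.swap)
  also have "\<dots> = (\<Sum>j<n. \<Sum>k<n. G j * q j k * F k)"
    using assms by (intro sum.cong refl) (simp add: mult.commute mult.left_commute)
  finally show ?thesis .
qed

lemma quad_add:
  fixes X Y W :: "nat \<Rightarrow> int" and q :: "nat \<Rightarrow> nat \<Rightarrow> int"
  assumes sym: "\<And>j k. j < n \<Longrightarrow> k < n \<Longrightarrow> q j k = q k j"
  shows "(\<Sum>j<n. \<Sum>k<n. (X j + Y j - 2*W j) * q j k * (X k + Y k - 2*W k))
    = (\<Sum>j<n. \<Sum>k<n. X j * q j k * X k) + (\<Sum>j<n. \<Sum>k<n. Y j * q j k * Y k)
      + 2 * (\<Sum>j<n. \<Sum>k<n. X j * q j k * Y k)
      + 4 * ((\<Sum>j<n. \<Sum>k<n. W j * q j k * W k) - (\<Sum>j<n. \<Sum>k<n. W j * q j k * (X k + Y k)))"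
proof -
  define A where "A j = X j + Y j" for j
  have pt: "(X j + Y j - 2*W j) * q j k * (X k + Y k - 2*W k) =
     X j*q j k*X k + Y j*q j k*Y k + X j*q j k*Y k + Y j*q j k*X k + 4*(W j*q j k*W k)
     - 2*(W j*q j k*A k) - 2*(A j*q j k*W k)" for j k
    by (simp add: A_def algebra_simps)
  have s1: "(\<Sum>j<n. \<Sum>k<n. Y j * q j k * X k) = (\<Sum>j<n. \<Sum>k<n. X j * q j k * Y k)"
    by (rule swap_bilin[OF sym])
  have s2: "(\<Sum>j<n. \<Sum>k<n. A j * q j k * W k) = (\<Sum>j<n. \<Sum>k<n. W j * q j k * A k)"
    by (rule swap_bilin[OF sym])
  have "(\<Sum>j<n. \<Sum>k<n. (X j + Y j - 2*W j) * q j k * (X k + Y k - 2*W k))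
     = (\<Sum>j<n. \<Sum>k<n. X j*q j k*X k) + (\<Sum>j<n. \<Sum>k<n. Y j*q j k*Y k)
       + (\<Sum>j<n. \<Sum>k<n. X j*q j k*Y k) + (\<Sum>j<n. \<Sum>k<n. Y j*q j k*X k)
       + 4*(\<Sum>j<n. \<Sum>k<n. W j*q j k*W k)
       - 2*(\<Sum>j<n. \<Sum>k<n. W j*q j k*A k) - 2*(\<Sum>j<n. \<Sum>k<n. A j*q j k*W k)"
    unfolding pt by (simp add: sum.distrib sum_subtractf sum_distrib_left)
  also have "\<dots> = (\<Sum>j<n. \<Sum>k<n. X j * q j k * X k) + (\<Sum>j<n. \<Sum>k<n. Y j * q j k * Y k)
      + 2 * (\<Sum>j<n. \<Sum>k<n. X j * q j k * Y k)
      + 4 * ((\<Sum>j<n. \<Sum>k<n. W j * q j k * W k) - (\<Sum>j<n. \<Sum>k<n. W j * q j k * A k))"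
    unfolding s1 s2 by (simp add: algebra_simps)
  finally show ?thesis by (simp add: A_def)
qed

lemma sum_mod2_cong:
  fixes f g :: "nat \<Rightarrow> int"
  assumes "\<And>j. j \<in> A \<Longrightarrow> f j mod 2 = g j mod 2"
  shows "sum f A mod 2 = sum g A mod 2"
proof -
  have "sum f A mod 2 = (\<Sum>j\<in>A. f j mod 2) mod 2" by (simp add: mod_sum_eq)
  also have "(\<Sum>j\<in>A. f j mod 2) = (\<Sum>j\<in>A. g j mod 2)" by (rule sum.cong) (auto simp: assms)
  also have "(\<Sum>j\<in>A. g j mod 2) mod 2 = sum g A mod 2" by (simp add: mod_sum_eq)
  finally show ?thesis .
qed

locale qsetup =
  fixes m :: nat and Q :: "bit mat"
  assumes Qc: "Q \<in> carrier_mat m m" and Qs: "transpose_mat Q = Q"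
begin

abbreviation "V \<equiv> (carrier_vec m :: bit vec set)"

lemma Qsym: "j < m \<Longrightarrow> k < m \<Longrightarrow> Q $$ (j, k) = Q $$ (k, j)"
  using Qc by (metis Qs carrier_matD(1) carrier_matD(2) index_transpose_mat(1))

lemma bQsym: "j < m \<Longrightarrow> k < m \<Longrightarrow> bint (Q $$ (j, k)) = bint (Q $$ (k, j))"
  using Qsym by simp

lemma qform_sym: "qform_int m Q x y = qform_int m Q y x"
  unfolding qform_int_def
  by (rule swap_bilin[where q="\<lambda>j k. bint (Q $$ (j, k))", OF bQsym])

lemma qform_add:
  assumes x: "x \<in> V" and y: "y \<in> V"
  shows "qform_int m Q (x + y) (x + y) mod 4 =
         (qform_int m Q x x + qform_int m Q y y + 2 * qform_int m Q x y) mod 4"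
proof -
  let ?X = "\<lambda>j. bint (x $ j)" and ?Y = "\<lambda>j. bint (y $ j)" and ?W = "\<lambda>j. bint (x $ j) * bint (y $ j)"
  have "qform_int m Q (x + y) (x + y) =
     (\<Sum>j<m. \<Sum>k<m. (?X j + ?Y j - 2 * ?W j) * bint (Q $$ (j, k)) * (?X k + ?Y k - 2 * ?W k))"
    unfolding qform_int_def using x y
    by (intro sum.cong refl) (simp del: add_bit_eq_xor add: bint_add mult.assoc)
  also have "\<dots> = qform_int m Q x x + qform_int m Q y y + 2 * qform_int m Q x y +
     4 * ((\<Sum>j<m. \<Sum>k<m. ?W j * bint (Q $$ (j, k)) * ?W k) - (\<Sum>j<m. \<Sum>k<m. ?W j * bint (Q $$ (j, k)) * (?X k + ?Y k)))"
    unfolding qform_int_def by (rule quad_add[OF bQsym])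
  finally show ?thesis by (simp only: mod_mult_self2)
qed

lemma lin_add:
  assumes x: "x \<in> V" and y: "y \<in> V"
  shows "(2 * lin_int m b (x + y)) mod 4 = (2 * lin_int m b x + 2 * lin_int m b y) mod 4"
proof -
  have "lin_int m b (x + y) = lin_int m b x + lin_int m b y - 2 * (\<Sum>j<m. bint (b $ j) * (bint (x $ j) * bint (y $ j)))"
    unfolding lin_int_def using x y
    by (simp del: add_bit_eq_xor add: bint_add sum.distrib sum_subtractf sum_distrib_left algebra_simps)
  then obtain d where "lin_int m b (x + y) = lin_int m b x + lin_int m b y - 2 * d" by blast
  then have "2 * lin_int m b (x + y) = (2 * lin_int m b x + 2 * lin_int m b y) - 4 * d" by linarith
  then show ?thesis by (rule m4a)
qed

definition "f b x = qform_int m Q x x + 2 * lin_int m b x"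

lemma f_add:
  assumes x: "x \<in> V" and y: "y \<in> V"
  shows "ipow (f b (x + y)) = ipow (f b x) * ipow (f b y) * ipow (2 * qform_int m Q x y)"
proof -
  have "(qform_int m Q (x + y) (x + y) + 2 * lin_int m b (x + y)) mod 4 =
      ((qform_int m Q x x + qform_int m Q y y + 2 * qform_int m Q x y) + (2 * lin_int m b x + 2 * lin_int m b y)) mod 4"
    by (rule mod_add_cong[OF qform_add[OF x y] lin_add[OF x y, of b]])
  moreover have "(qform_int m Q x x + qform_int m Q y y + 2 * qform_int m Q x y) + (2 * lin_int m b x + 2 * lin_int m b y)
     = f b x + f b y + 2 * qform_int m Q x y" by (simp add: f_def)
  ultimately have "f b (x + y) mod 4 = (f b x + f b y + 2 * qform_int m Q x y) mod 4"
    unfolding f_def by simp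
  then show ?thesis by (simp add: ipow_cong[of "f b (x+y)"] ipow_add)
qed

lemma mult_vec_index: "z \<in> V \<Longrightarrow> j < m \<Longrightarrow> (Q *\<^sub>v z) $ j = (\<Sum>k<m. Q $$ (j, k) * z $ k)"
  using Qc by (auto simp: mult_mat_vec_def scalar_prod_def row_def lessThan_atLeast0 intro!: sum.cong)

lemma qform_lin:
  assumes x: "x \<in> V" and z: "z \<in> V"
  shows "qform_int m Q x z mod 2 = lin_int m (Q *\<^sub>v z) x mod 2"
proof -
  have "qform_int m Q x z = (\<Sum>j<m. bint (x $ j) * (\<Sum>k<m. bint (Q $$ (j, k)) * bint (z $ k)))"
    unfolding qform_int_def by (simp add: sum_distrib_left mult.assoc)
  also have "\<dots> mod 2 = (\<Sum>j<m. bint ((Q *\<^sub>v z) $ j) * bint (x $ j)) mod 2"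
  proof (rule sum_mod2_cong)
    fix j assume j: "j \<in> {..<m}"
    have jm: "j < m" using j by simp
    have "bint ((Q *\<^sub>v z) $ j) mod 2 = (\<Sum>k<m. bint (Q $$ (j, k) * z $ k)) mod 2"
      unfolding mult_vec_index[OF z jm] by (rule bint_sum_mod2) simp
    then have "bint ((Q *\<^sub>v z) $ j) mod 2 = (\<Sum>k<m. bint (Q $$ (j, k)) * bint (z $ k)) mod 2"
      by (simp only: bint_mult)
    then show "bint (x $ j) * (\<Sum>k<m. bint (Q $$ (j, k)) * bint (z $ k)) mod 2 = bint ((Q *\<^sub>v z) $ j) * bint (x $ j) mod 2"
      by (metis mod_mult_right_eq mult.commute)
  qed
  finally show ?thesis unfolding lin_int_def .
qed

lemma qform_diag:
  assumes x: "x \<in> V"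
  shows "qform_int m Q x x mod 2 = lin_int m (diag_vec Q) x mod 2"
proof -
  have "qform_int m Q x x = (\<Sum>j<m. bint (x $ j) * bint (Q $$ (j, j)) * bint (x $ j))
     + 2 * (\<Sum>j<m. \<Sum>k<j. bint (x $ j) * bint (Q $$ (j, k)) * bint (x $ k))"
    unfolding qform_int_def
    by (rule diag_split) (simp add: bQsym mult.commute mult.left_commute)
  moreover have "(\<Sum>j<m. bint (x $ j) * bint (Q $$ (j, j)) * bint (x $ j)) = lin_int m (diag_vec Q) x"
    unfolding lin_int_def diag_vec_def using Qc
    by (intro sum.cong refl) (auto simp: bint_sq3)
  ultimately have "qform_int m Q x x = lin_int m (diag_vec Q) x + 2 * (\<Sum>j<m. \<Sum>k<j. bint (x $ j) * bint (Q $$ (j, k)) * bint (x $ k))"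
    by simp
  then show ?thesis by (rule m2b)
qed

lemma lin_vadd:
  assumes u: "u \<in> V" and v: "v \<in> V"
  shows "lin_int m (u + v) x mod 2 = (lin_int m u x + lin_int m v x) mod 2"
proof -
  have "lin_int m (u + v) x = lin_int m u x + lin_int m v x - 2 * (\<Sum>j<m. bint (u $ j) * bint (v $ j) * bint (x $ j))"
    unfolding lin_int_def using u v
    by (simp del: add_bit_eq_xor add: bint_add sum.distrib sum_subtractf sum_distrib_left algebra_simps)
  then show ?thesis by (rule m2a)
qed

lemma lin_zero[simp]: "lin_int m (0\<^sub>v m) x = 0"
  by (simp add: lin_int_def)

end


lemma bit_cancel: "(a::bit) + (a + c) = c"
  by (cases a; cases c) (simp_all del: add_bit_eq_xor)

lemma bit_self: "(a::bit) + a = 0"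
  by (cases a) (simp_all del: add_bit_eq_xor)

lemma bit_eq0: "((a::bit) + c = 0) = (a = c)"
  by (cases a; cases c) (simp_all del: add_bit_eq_xor)

context qsetup
begin

lemma vadd_cancel: "x \<in> V \<Longrightarrow> z \<in> V \<Longrightarrow> x + (x + z) = z"
  by (intro eq_vecI) (auto simp del: add_bit_eq_xor simp: bit_cancel)

lemma vadd_self: "x \<in> V \<Longrightarrow> x + x = 0\<^sub>v m"
  by (intro eq_vecI) (auto simp del: add_bit_eq_xor simp: bit_self)

lemma vadd_eq0: "u \<in> V \<Longrightarrow> v \<in> V \<Longrightarrow> (u + v = 0\<^sub>v m) = (u = v)"
proof
  assume u: "u \<in> V" and v: "v \<in> V" and e: "u + v = 0\<^sub>v m"
  show "u = v"
  proof (rule eq_vecI)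
    fix i assume "i < dim_vec v"
    then have i: "i < m" using v by auto
    have "(u + v) $ i = 0" using e i by simp
    then show "u $ i = v $ i" using u v i by (simp del: add_bit_eq_xor add: bit_eq0)
  qed (use u v in auto)
next
  assume "u \<in> V" "v \<in> V" "u = v"
  then show "u + v = 0\<^sub>v m" by (simp add: vadd_self)
qed

lemma transl_bij: "x \<in> V \<Longrightarrow> bij_betw (\<lambda>z. x + z) V V"
  by (rule bij_betw_byWitness[of _ "\<lambda>z. x + z"]) (auto simp: vadd_cancel)

lemma dV: "diag_vec Q \<in> V"
  using Qc by (simp add: diag_vec_def)

lemma QvV: "z \<in> V \<Longrightarrow> Q *\<^sub>v z \<in> V"
  using Qc by simp

lemma Qadd: "u \<in> V \<Longrightarrow> v \<in> V \<Longrightarrow> Q *\<^sub>v (u + v) = Q *\<^sub>v u + Q *\<^sub>v v"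
  using Qc by (rule mult_add_distrib_mat_vec)

definition "K = {z \<in> V. Q *\<^sub>v z = 0\<^sub>v m}"

lemma K_sub: "K \<subseteq> V" by (auto simp: K_def)
lemma finite_K: "finite K" by (rule finite_subset[OF K_sub]) simp
lemma zero_K: "0\<^sub>v m \<in> K" using Qc by (auto simp: K_def)
lemma card_K_pos: "card K > 0" using zero_K finite_K by (auto simp: card_gt_0_iff)

lemma fiber:
  assumes z0: "z0 \<in> V"
  shows "{z \<in> V. Q *\<^sub>v z = Q *\<^sub>v z0} = (\<lambda>k. z0 + k) ` K" (is ?A)
    and "inj_on (\<lambda>k. z0 + k) K" (is ?B)
proof -
  show ?A
  proof
    show "{z \<in> V. Q *\<^sub>v z = Q *\<^sub>v z0} \<subseteq> (\<lambda>k. z0 + k) ` K"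
    proof
      fix z assume "z \<in> {z \<in> V. Q *\<^sub>v z = Q *\<^sub>v z0}"
      then have z: "z \<in> V" and e: "Q *\<^sub>v z = Q *\<^sub>v z0" by auto
      have "z0 + z \<in> K" using z z0 e by (auto simp: K_def Qadd vadd_self QvV)
      moreover have "z = z0 + (z0 + z)" using z z0 by (simp add: vadd_cancel)
      ultimately show "z \<in> (\<lambda>k. z0 + k) ` K" by blast
    qed
  next
    show "(\<lambda>k. z0 + k) ` K \<subseteq> {z \<in> V. Q *\<^sub>v z = Q *\<^sub>v z0}"
      using z0 QvV by (auto simp: K_def Qadd)
  qed
  show ?B
  proof (rule inj_onI)
    fix k k' assume kk: "k \<in> K" "k' \<in> K" and e: "z0 + k = z0 + k'"
    have kV: "k \<in> V" "k' \<in> V" using kk K_sub by auto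
    have "k = z0 + (z0 + k)" using vadd_cancel[OF z0 kV(1)] by simp
    also have "\<dots> = z0 + (z0 + k')" using e by simp
    also have "\<dots> = k'" using vadd_cancel[OF z0 kV(2)] by simp
    finally show "k = k'" .
  qed
qed

lemma card_fiber: "z0 \<in> V \<Longrightarrow> card {z \<in> V. Q *\<^sub>v z = Q *\<^sub>v z0} = card K"
  using fiber by (simp add: card_image)

lemma K_lin0: "k \<in> K \<Longrightarrow> x \<in> V \<Longrightarrow> ipow (2 * qform_int m Q x k) = 1"
proof -
  assume k: "k \<in> K" and x: "x \<in> V"
  have "qform_int m Q x k mod 2 = lin_int m (Q *\<^sub>v k) x mod 2" using k x K_sub by (intro qform_lin) auto
  also have "lin_int m (Q *\<^sub>v k) x = 0" using k by (simp add: K_def)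
  finally have "qform_int m Q x k mod 2 = 0 mod 2" by simp
  then show ?thesis using ipow_2_cong[of "qform_int m Q x k" 0] by simp
qed

lemma key_exp:
  assumes x: "x \<in> V" and z: "z \<in> V"
  shows "ipow (f b x) * ipow (f b (x + z)) = ipow (f b z) * ipow (2 * lin_int m (diag_vec Q + Q *\<^sub>v z) x)"
proof -
  have h1: "qform_int m Q x x mod 2 = lin_int m (diag_vec Q) x mod 2" by (rule qform_diag[OF x])
  have h2: "qform_int m Q x z mod 2 = lin_int m (Q *\<^sub>v z) x mod 2" by (rule qform_lin[OF x z])
  have h3: "lin_int m (diag_vec Q + Q *\<^sub>v z) x mod 2 = (lin_int m (diag_vec Q) x + lin_int m (Q *\<^sub>v z) x) mod 2"
    by (rule lin_vadd[OF dV QvV[OF z]])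
  have "(qform_int m Q x x + qform_int m Q x z) mod 2 = (lin_int m (diag_vec Q) x + lin_int m (Q *\<^sub>v z) x) mod 2"
    by (rule mod_add_cong[OF h1 h2])
  also have "\<dots> = lin_int m (diag_vec Q + Q *\<^sub>v z) x mod 2" using h3 by simp
  finally have "ipow (2 * (qform_int m Q x x + qform_int m Q x z)) = ipow (2 * lin_int m (diag_vec Q + Q *\<^sub>v z) x)"
    by (rule ipow_2_cong)
  moreover have "f b x + f b x + 2 * qform_int m Q x z = 2 * (qform_int m Q x x + qform_int m Q x z) + 4 * (lin_int m b x)"
    unfolding f_def by simp
  ultimately have "ipow (f b x + f b x + 2 * qform_int m Q x z) = ipow (2 * lin_int m (diag_vec Q + Q *\<^sub>v z) x)"
    by (simp only: ipow_add ipow_4 mult_1_right)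
  moreover have "ipow (f b x + f b x + 2 * qform_int m Q x z) = ipow (f b x) * ipow (f b x) * ipow (2 * qform_int m Q x z)"
    by (simp only: ipow_add)
  moreover have "ipow (f b x) * ipow (f b (x + z)) = ipow (f b z) * (ipow (f b x) * ipow (f b x) * ipow (2 * qform_int m Q x z))"
    unfolding f_add[OF x z, of b] by (simp only: mult_ac)
  ultimately show ?thesis by simp
qed

definition "Sol = {z \<in> V. Q *\<^sub>v z = diag_vec Q}"

lemma finite_Sol: "finite Sol" by (auto simp: Sol_def)

lemma Ssq:
  "(\<Sum>x\<in>V. ipow (f b x)) ^ 2 = 2 ^ m * (\<Sum>z\<in>Sol. ipow (f b z))"
proof -
  let ?w = "\<lambda>z. diag_vec Q + Q *\<^sub>v z"
  have "(\<Sum>x\<in>V. ipow (f b x)) ^ 2 = (\<Sum>x\<in>V. \<Sum>y\<in>V. ipow (f b x) * ipow (f b y))"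
    by (simp add: power2_eq_square sum_product)
  also have "\<dots> = (\<Sum>x\<in>V. \<Sum>z\<in>V. ipow (f b x) * ipow (f b (x + z)))"
  proof (rule sum.cong[OF refl])
    fix x assume x: "x \<in> V"
    show "(\<Sum>y\<in>V. ipow (f b x) * ipow (f b y)) = (\<Sum>z\<in>V. ipow (f b x) * ipow (f b (x + z)))"
      using sum.reindex_bij_betw[OF transl_bij[OF x], of "\<lambda>y. ipow (f b x) * ipow (f b y)"] by simp
  qed
  also have "\<dots> = (\<Sum>x\<in>V. \<Sum>z\<in>V. ipow (f b z) * ipow (2 * lin_int m (?w z) x))"
    by (intro sum.cong refl key_exp)
  also have "\<dots> = (\<Sum>z\<in>V. ipow (f b z) * (\<Sum>x\<in>V. ipow (2 * lin_int m (?w z) x)))"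
    by (subst sum.swap) (simp add: sum_distrib_left)
  also have "\<dots> = (\<Sum>z\<in>V. if Q *\<^sub>v z = diag_vec Q then 2 ^ m * ipow (f b z) else 0)"
  proof (rule sum.cong[OF refl])
    fix z assume z: "z \<in> V"
    have wV: "?w z \<in> V" using dV QvV[OF z] by simp
    have "(?w z = 0\<^sub>v m) = (diag_vec Q = Q *\<^sub>v z)" by (rule vadd_eq0[OF dV QvV[OF z]])
    then show "ipow (f b z) * (\<Sum>x\<in>V. ipow (2 * lin_int m (?w z) x)) =
        (if Q *\<^sub>v z = diag_vec Q then 2 ^ m * ipow (f b z) else 0)"
      using char_sum[OF wV] by auto
  qed
  also have "\<dots> = (\<Sum>z\<in>Sol. 2 ^ m * ipow (f b z))"
    unfolding Sol_def by (rule sum.inter_filter[symmetric]) simp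
  also have "\<dots> = 2 ^ m * (\<Sum>z\<in>Sol. ipow (f b z))"
    by (simp add: sum_distrib_left)
  finally show ?thesis .
qed

lemma card_Sol: "card Sol = card K"
proof -
  let ?w = "\<lambda>z. diag_vec Q + Q *\<^sub>v z"
  let ?G = "\<Sum>z\<in>V. \<Sum>y\<in>V. ipow (2 * lin_int m (?w z) y)"
  have "?G = (\<Sum>z\<in>V. if Q *\<^sub>v z = diag_vec Q then 2 ^ m else 0)"
  proof (rule sum.cong[OF refl])
    fix z assume z: "z \<in> V"
    have wV: "?w z \<in> V" using dV QvV[OF z] by simp
    have "(?w z = 0\<^sub>v m) = (diag_vec Q = Q *\<^sub>v z)" by (rule vadd_eq0[OF dV QvV[OF z]])
    then show "(\<Sum>y\<in>V. ipow (2 * lin_int m (?w z) y)) = (if Q *\<^sub>v z = diag_vec Q then 2 ^ m else 0)"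
      using char_sum[OF wV] by auto
  qed
  also have "\<dots> = (\<Sum>z\<in>Sol. 2 ^ m)"
    unfolding Sol_def by (rule sum.inter_filter[symmetric]) simp
  finally have G1: "?G = of_nat (card Sol) * 2 ^ m" by simp
  have pt: "ipow (2 * lin_int m (?w z) y) = ipow (2 * lin_int m (diag_vec Q) y) * ipow (2 * lin_int m (Q *\<^sub>v y) z)"
    if z: "z \<in> V" and y: "y \<in> V" for z y
  proof -
    have h1: "lin_int m (?w z) y mod 2 = (lin_int m (diag_vec Q) y + lin_int m (Q *\<^sub>v z) y) mod 2"
      by (rule lin_vadd[OF dV QvV[OF z]])
    have h2: "qform_int m Q y z mod 2 = lin_int m (Q *\<^sub>v z) y mod 2" by (rule qform_lin[OF y z])
    have h3: "qform_int m Q z y mod 2 = lin_int m (Q *\<^sub>v y) z mod 2" by (rule qform_lin[OF z y])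
    have h4: "qform_int m Q y z = qform_int m Q z y" by (rule qform_sym)
    have h5: "lin_int m (Q *\<^sub>v z) y mod 2 = lin_int m (Q *\<^sub>v y) z mod 2"
      using h2 h3 h4 by simp
    have "lin_int m (?w z) y mod 2 = (lin_int m (diag_vec Q) y + lin_int m (Q *\<^sub>v y) z) mod 2"
      unfolding h1 by (rule mod_add_cong[OF refl h5])
    then have "ipow (2 * lin_int m (?w z) y) = ipow (2 * (lin_int m (diag_vec Q) y + lin_int m (Q *\<^sub>v y) z))"
      by (rule ipow_2_cong)
    then show ?thesis by (simp add: distrib_left ipow_add)
  qed
  have "?G = (\<Sum>y\<in>V. \<Sum>z\<in>V. ipow (2 * lin_int m (?w z) y))" by (rule sum.swap)
  also have "\<dots> = (\<Sum>y\<in>V. ipow (2 * lin_int m (diag_vec Q) y) * (\<Sum>z\<in>V. ipow (2 * lin_int m (Q *\<^sub>v y) z)))"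
    by (simp add: pt sum_distrib_left)
  also have "\<dots> = (\<Sum>y\<in>V. if Q *\<^sub>v y = 0\<^sub>v m then 2 ^ m else 0)"
  proof (rule sum.cong[OF refl])
    fix y assume y: "y \<in> V"
    have one: "ipow (2 * lin_int m (diag_vec Q) y) = 1" if "Q *\<^sub>v y = 0\<^sub>v m"
    proof -
      have "lin_int m (diag_vec Q) y mod 2 = qform_int m Q y y mod 2" using qform_diag[OF y] by simp
      also have "\<dots> = lin_int m (Q *\<^sub>v y) y mod 2" by (rule qform_lin[OF y y])
      also have "\<dots> = 0 mod 2" using that by simp
      finally show ?thesis using ipow_2_cong[of "lin_int m (diag_vec Q) y" 0] by simp
    qed
    show "ipow (2 * lin_int m (diag_vec Q) y) * (\<Sum>z\<in>V. ipow (2 * lin_int m (Q *\<^sub>v y) z)) =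
        (if Q *\<^sub>v y = 0\<^sub>v m then 2 ^ m else 0)"
      using char_sum[OF QvV[OF y]] one by auto
  qed
  also have "\<dots> = (\<Sum>y\<in>K. 2 ^ m)"
    unfolding K_def by (rule sum.inter_filter[symmetric]) simp
  finally have "?G = of_nat (card K) * 2 ^ m" by simp
  with G1 have "(of_nat (card Sol) :: complex) = of_nat (card K)" by simp
  then show ?thesis using of_nat_eq_iff by blast
qed

lemma Sol_ex: "\<exists>z1. z1 \<in> Sol"
proof -
  have "card Sol > 0" using card_Sol card_K_pos by simp
  then have "Sol \<noteq> {}" by auto
  then show ?thesis by auto
qed

lemma T_prop:
  fixes b :: "bit vec"
  defines "T \<equiv> \<Sum>k\<in>K. ipow (f b k)"
  shows "T = 0 \<or> T = of_nat (card K)"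
proof (cases "T = 0")
  case False
  have "ipow (f b k') = 1" if k': "k' \<in> K" for k'
  proof -
    have k'V: "k' \<in> V" using k' K_sub by auto
    have h1: "\<forall>a\<in>K. k' + (k' + a) = a" using K_sub by (auto simp: vadd_cancel[OF k'V])
    have h3: "(\<lambda>k. k' + k) ` K \<subseteq> K"
      using k' by (auto simp: K_def Qadd)
    have bij: "bij_betw (\<lambda>k. k' + k) K K" by (rule bij_betw_byWitness[OF h1 h1 h3 h3])
    have "T = (\<Sum>k\<in>K. ipow (f b (k' + k)))"
      unfolding T_def using sum.reindex_bij_betw[OF bij, of "\<lambda>k. ipow (f b k)"] by simp
    also have "\<dots> = (\<Sum>k\<in>K. ipow (f b k') * ipow (f b k))"
    proof (rule sum.cong[OF refl])
      fix k assume k: "k \<in> K"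
      then have kV: "k \<in> V" using K_sub by auto
      show "ipow (f b (k' + k)) = ipow (f b k') * ipow (f b k)"
        using f_add[OF k'V kV, of b] K_lin0[OF k k'V] by simp
    qed
    also have "\<dots> = ipow (f b k') * T" by (simp add: T_def sum_distrib_left)
    finally show ?thesis using False by simp
  qed
  then have "T = (\<Sum>k\<in>K. 1)" unfolding T_def by (intro sum.cong) auto
  then show ?thesis by simp
qed simp

lemma Sol_sum:
  assumes z1: "z1 \<in> Sol"
  shows "(\<Sum>z\<in>Sol. ipow (f b z)) = ipow (f b z1) * (\<Sum>k\<in>K. ipow (f b k))"
proof -
  have z1V: "z1 \<in> V" using z1 by (auto simp: Sol_def)
  have "Sol = {z \<in> V. Q *\<^sub>v z = Q *\<^sub>v z1}" using z1 by (auto simp: Sol_def)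
  then have SolK: "Sol = (\<lambda>k. z1 + k) ` K" using fiber(1)[OF z1V] by simp
  have "(\<Sum>z\<in>Sol. ipow (f b z)) = (\<Sum>k\<in>K. ipow (f b (z1 + k)))"
    unfolding SolK by (rule sum.reindex[OF fiber(2)[OF z1V], unfolded comp_def])
  also have "\<dots> = (\<Sum>k\<in>K. ipow (f b z1) * ipow (f b k))"
  proof (rule sum.cong[OF refl])
    fix k assume k: "k \<in> K"
    then have kV: "k \<in> V" using K_sub by auto
    show "ipow (f b (z1 + k)) = ipow (f b z1) * ipow (f b k)"
      using f_add[OF z1V kV, of b] K_lin0[OF k z1V] by simp
  qed
  finally show ?thesis by (simp add: sum_distrib_left)
qed

end


lemma bvec_self: "(x :: bit vec) \<in> carrier_vec n \<Longrightarrow> x + x = 0\<^sub>v n"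
  by (intro eq_vecI) (auto simp del: add_bit_eq_xor simp: bit_self)

locale bitvs = vec_space "TYPE(bit)" n for n
begin

lemma li_zero:
  assumes li: "lin_indpt B" and fin: "finite B" and c0: "lincomb c B = 0\<^sub>v n" and v: "v \<in> B"
  shows "c v = 0"
proof (rule ccontr)
  assume cv: "c v \<noteq> 0"
  have "lin_dep B"
    unfolding lin_dep_def
    by (rule exI[of _ B], rule exI[of _ c], rule exI[of _ v]) (use fin c0 v cv in \<open>auto simp: class_ring_simps\<close>)
  with li show False by simp
qed

lemma card_span_li:
  assumes fin: "finite B" and B: "B \<subseteq> carrier_vec n" and li: "lin_indpt B"
  shows "card (span B) = 2 ^ card B"
proof -
  let ?L = "\<lambda>c. lincomb c B"
  have sp: "span B = ?L ` (B \<rightarrow>\<^sub>E (UNIV :: bit set))"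
  proof (intro equalityI subsetI)
    fix x assume "x \<in> span B"
    then obtain a where x: "x = lincomb a B" using finite_span[OF fin B] by auto
    have "lincomb a B = lincomb (restrict a B) B"
      by (rule lincomb_cong) (use B in \<open>auto simp: class_ring_simps\<close>)
    moreover have "restrict a B \<in> B \<rightarrow>\<^sub>E (UNIV :: bit set)" by simp
    ultimately show "x \<in> ?L ` (B \<rightarrow>\<^sub>E (UNIV :: bit set))" using x by (intro image_eqI) auto
  next
    fix x assume "x \<in> ?L ` (B \<rightarrow>\<^sub>E (UNIV :: bit set))"
    then obtain c where "x = lincomb c B" by auto
    then show "x \<in> span B" using finite_span[OF fin B] by (auto simp: class_ring_simps)
  qed
  have inj: "inj_on ?L (B \<rightarrow>\<^sub>E (UNIV :: bit set))"
  proof (rule inj_onI)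
    fix c c' assume c: "c \<in> B \<rightarrow>\<^sub>E (UNIV :: bit set)" and c': "c' \<in> B \<rightarrow>\<^sub>E (UNIV :: bit set)"
      and e: "lincomb c B = lincomb c' B"
    have cl: "lincomb c B \<in> carrier_vec n" using B by (intro lincomb_closed) (auto simp: class_ring_simps)
    have "lincomb (\<lambda>v. c v + c' v) B = lincomb c B + lincomb c' B"
      using lincomb_sum[OF fin B, of c c'] by (simp add: class_ring_simps)
    also have "\<dots> = 0\<^sub>v n" using e cl bvec_self by simp
    finally have z: "lincomb (\<lambda>v. c v + c' v) B = 0\<^sub>v n" .
    show "c = c'"
    proof (rule ext)
      fix v show "c v = c' v"
      proof (cases "v \<in> B")
        case True
        then have "c v + c' v = 0" using li_zero[OF li fin z] by simp
        then show ?thesis by (simp del: add_bit_eq_xor add: bit_eq0)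
      next
        case False
        then show ?thesis using PiE_arb[OF c, of v] PiE_arb[OF c', of v] by simp
      qed
    qed
  qed
  have "card (span B) = card (B \<rightarrow>\<^sub>E (UNIV :: bit set))"
    unfolding sp by (rule card_image[OF inj])
  also have "\<dots> = (\<Prod>i\<in>B. card (UNIV :: bit set))" by (rule card_PiE[OF fin])
  also have "\<dots> = 2 ^ card B" by (simp add: UNIV_bit numeral_2_eq_2)
  finally show ?thesis .
qed

lemma card_span_dim:
  assumes S: "S \<subseteq> carrier_vec n" and fin: "finite S"
  shows "card (span S) = 2 ^ vectorspace.dim class_ring (span_vs S)"
proof -
  have vsW: "vectorspace class_ring (span_vs S)"
    using field.field_axioms vectorspace_def submodule_is_module[OF span_is_submodule[OF S]] by metis
  have fd: "vectorspace.fin_dim class_ring (span_vs S)" using fin_dim_span[OF fin] S by simp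
  obtain \<beta> where fb: "finite \<beta>" and bas: "vectorspace.basis class_ring (span_vs S) \<beta>"
    using vectorspace.finite_basis_exists[OF vsW fd] by blast
  have dim: "vectorspace.dim class_ring (span_vs S) = card \<beta>"
    by (rule vectorspace.dim_basis[OF vsW fb bas])
  have bsub: "\<beta> \<subseteq> span S"
    using bas unfolding vectorspace.basis_def[OF vsW] by simp
  note nd = span_li_not_depend[OF bsub span_is_submodule[OF S]]
  have gen: "span \<beta> = span S" and li: "lin_indpt \<beta>"
    using bas nd unfolding vectorspace.basis_def[OF vsW] by auto
  have bc: "\<beta> \<subseteq> carrier_vec n" using bsub span_is_subset2[OF S] by auto
  have "card (span S) = card (span \<beta>)" using gen by simp
  also have "\<dots> = 2 ^ card \<beta>" by (rule card_span_li[OF fb bc li])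
  finally show ?thesis using dim by simp
qed

end

context qsetup
begin

lemma card_K_rank: "card K * 2 ^ vec_space.rank m Q = 2 ^ m" and rank_le: "vec_space.rank m Q \<le> m"
proof -
  interpret B: bitvs m .
  have colsc: "set (cols Q) \<subseteq> carrier_vec m" using Qc by (auto simp: cols_def)
  have Im: "(\<lambda>z. Q *\<^sub>v z) ` V = B.span (set (cols Q))"
    using B.col_space_eq[OF Qc] Qc unfolding B.col_space_def by auto
  have cardIm: "card ((\<lambda>z. Q *\<^sub>v z) ` V) = 2 ^ B.rank Q"
    unfolding Im B.rank_def by (rule B.card_span_dim[OF colsc]) simp
  have "card V = (\<Sum>w\<in>(\<lambda>z. Q *\<^sub>v z) ` V. card {x. x \<in> V \<and> Q *\<^sub>v x = w})"
    using sum.group[of V "(\<lambda>z. Q *\<^sub>v z) ` V" "\<lambda>z. Q *\<^sub>v z" "\<lambda>_. 1::nat"] by simp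
  also have "\<dots> = (\<Sum>w\<in>(\<lambda>z. Q *\<^sub>v z) ` V. card K)"
  proof (rule sum.cong[OF refl])
    fix w assume "w \<in> (\<lambda>z. Q *\<^sub>v z) ` V"
    then obtain z0 where z0: "z0 \<in> V" and w: "w = Q *\<^sub>v z0" by auto
    have "{x. x \<in> V \<and> Q *\<^sub>v x = w} = {z \<in> V. Q *\<^sub>v z = Q *\<^sub>v z0}" using w by auto
    then show "card {x. x \<in> V \<and> Q *\<^sub>v x = w} = card K" using card_fiber[OF z0] by simp
  qed
  also have "\<dots> = card K * 2 ^ B.rank Q" using cardIm by simp
  finally show "card K * 2 ^ vec_space.rank m Q = 2 ^ m" by (simp add: card_carrier_vec_bit)
  show "vec_space.rank m Q \<le> m" by (rule B.rank_le_nc[OF Qc])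
qed

lemma card_K: "card K = 2 ^ (m - vec_space.rank m Q)"
proof -
  have "card K * 2 ^ vec_space.rank m Q = 2 ^ (m - vec_space.rank m Q) * 2 ^ vec_space.rank m Q"
    using card_K_rank rank_le by (simp add: power_add[symmetric])
  then show ?thesis by simp
qed

end

theorem propositionA2:
  fixes m r :: nat and Q :: "bit mat" and b :: "bit vec"
  assumes "Q \<in> carrier_mat m m"
    and "transpose_mat Q = Q"
    and "rank2 m Q = r"
    and "b \<in> carrier_vec m"
  defines "S \<equiv> (\<Sum>x\<in>carrier_vec m. ipow (qform_int m Q x x + 2 * lin_int m b x))"
  shows "\<exists>z1 \<in> carrier_vec m. transpose_mat Q *\<^sub>v z1 = diag_vec Q \<and>
           (S = 0 \<or> S ^ 2 = ipow (qform_int m Q z1 z1 + 2 * lin_int m b z1) * 2 ^ (2 * m - r))"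
proof -
  interpret qsetup m Q using assms(1,2) by unfold_locales
  have rr: "vec_space.rank m Q = r" using assms(3) by (simp add: rank2_def)
  have rle: "r \<le> m" using rank_le rr by simp
  have cK: "card K = 2 ^ (m - r)" using card_K rr by simp
  obtain z1 where z1: "z1 \<in> Sol" using Sol_ex by blast
  have z1V: "z1 \<in> carrier_vec m" and z1Q: "Q *\<^sub>v z1 = diag_vec Q" using z1 by (auto simp: Sol_def)
  have SS: "S = (\<Sum>x\<in>V. ipow (f b x))" by (simp add: S_def f_def)
  define T where "T = (\<Sum>k\<in>K. ipow (f b k))"
  have S2: "S ^ 2 = 2 ^ m * (ipow (f b z1) * T)"
    unfolding SS Ssq Sol_sum[OF z1] T_def ..
  have "S = 0 \<or> S ^ 2 = ipow (qform_int m Q z1 z1 + 2 * lin_int m b z1) * 2 ^ (2 * m - r)"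
  proof (cases "T = 0")
    case True
    then show ?thesis using S2 by simp
  next
    case False
    then have "T = of_nat (card K)" using T_prop[of b] unfolding T_def by blast
    then have "T = 2 ^ (m - r)" using cK by simp
    then have "S ^ 2 = ipow (f b z1) * (2 ^ m * 2 ^ (m - r))" using S2 by (simp add: mult_ac)
    also have "(2::complex) ^ m * 2 ^ (m - r) = 2 ^ (2 * m - r)"
    proof -
      have ex: "m + (m - r) = 2 * m - r" using rle by simp
      show ?thesis by (simp only: power_add[symmetric] ex)
    qed
    finally show ?thesis by (simp add: f_def)
  qed
  then show ?thesis using z1V z1Q assms(2) by auto
qed

end
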